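(* Let $\beta>0$, $\nu>-1$, $\kappa>0$, $\gamma=\beta/(\nu+2)$, $\eta_\infty>0$, and let $s\in\mathbb{R}$ satisfy $$\frac{\beta(\nu+1)}{2(\nu+2)\,\eta_\infty^{\nu+3}}<s^2<\frac{\beta}{\eta_\infty^{\nu+3}}.$$ Then there exists a non-constant smooth solution $(w_s(z),\eta_s(z))$, $z\in\mathbb{R}$, with $\eta_s>0$, of the system $$s\,w_s+\eta_\infty^{-(\nu+2)}-\eta_s^{-(\nu+2)}=0,\qquad \gamma w_s-\kappa w_s''+s(\eta_s-\eta_\infty)=0,$$ satisfying $\lim_{|z|\to\infty}\eta_s(z)=\eta_\infty$ and $\lim_{|z|\to\infty}w_s(z)=0$. Moreover $\eta_s(z)>\eta_\infty$ for all $z$, i.e. in the phase plane $(\eta_s,\eta_s')$ this solution is a homoclinic loop to the saddle point $(\eta_\infty,0)$ lying to the right of it.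
   Context: These equations describe traveling waves $w=w_s(x-st)$, $\eta=\eta_s(x-st)$ of the system $w_t=-\partial_x(\eta^{-(\nu+2)})$, $\eta_t=(\gamma-\kappa\partial_x^2)w_x$. Eliminating $w_s$ via the first equation gives a second-order ODE for $\eta_s$. *)

theory Defs
  imports "HOL-Analysis.Analysis"
begin

definition smooth_deriv_seq :: "(real \<Rightarrow> real) \<Rightarrow> (nat \<Rightarrow> real \<Rightarrow> real) \<Rightarrow> bool" where
  "smooth_deriv_seq f D \<longleftrightarrow> D 0 = f \<and> (\<forall>n x. (D n has_real_derivative D (Suc n) x) (at x))"

definition smooth_real :: "(real \<Rightarrow> real) \<Rightarrow> bool" where
  "smooth_real f \<longleftrightarrow> (\<exists>D. smooth_deriv_seq f D)"

end

theory Submission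
  imports Defs
begin

definition Cn :: "nat \<Rightarrow> (real \<Rightarrow> real) \<Rightarrow> bool" where
  "Cn n \<phi> \<longleftrightarrow> (\<forall>k<n. \<forall>x. ((deriv^^k) \<phi> has_real_derivative (deriv^^(Suc k)) \<phi> x) (at x))"

lemma Cn_0[simp]: "Cn 0 \<phi>" by (simp add: Cn_def)

lemma Cn_Suc: "Cn (Suc n) \<phi> \<longleftrightarrow> (\<forall>x. (\<phi> has_real_derivative deriv \<phi> x) (at x)) \<and> Cn n (deriv \<phi>)"
proof -
  have e: "(deriv^^(Suc k)) \<phi> = (deriv^^k) (deriv \<phi>)" for k
    by (simp add: funpow_Suc_right del: funpow.simps)
  show ?thesis
  proof
    assume H: "Cn (Suc n) \<phi>"
    have "((deriv^^0) \<phi> has_real_derivative (deriv^^(Suc 0)) \<phi> x) (at x)" for x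
      using H unfolding Cn_def by blast
    hence "\<forall>x. (\<phi> has_real_derivative deriv \<phi> x) (at x)" by simp
    moreover have "Cn n (deriv \<phi>)"
      unfolding Cn_def
    proof (intro allI impI)
      fix k x assume "k < n"
      hence "((deriv^^(Suc k)) \<phi> has_real_derivative (deriv^^(Suc (Suc k))) \<phi> x) (at x)"
        using H unfolding Cn_def by blast
      thus "((deriv^^k) (deriv \<phi>) has_real_derivative (deriv^^(Suc k)) (deriv \<phi>) x) (at x)"
        by (simp only: e)
    qed
    ultimately show "(\<forall>x. (\<phi> has_real_derivative deriv \<phi> x) (at x)) \<and> Cn n (deriv \<phi>)" by blast
  next
    assume H: "(\<forall>x. (\<phi> has_real_derivative deriv \<phi> x) (at x)) \<and> Cn n (deriv \<phi>)"
    show "Cn (Suc n) \<phi>"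
      unfolding Cn_def
    proof (intro allI impI)
      fix k x assume k: "k < Suc n"
      show "((deriv^^k) \<phi> has_real_derivative (deriv^^(Suc k)) \<phi> x) (at x)"
      proof (cases k)
        case 0 thus ?thesis using H by simp
      next
        case (Suc j)
        hence "j < n" using k by simp
        hence "((deriv^^j) (deriv \<phi>) has_real_derivative (deriv^^(Suc j)) (deriv \<phi>) x) (at x)"
          using H unfolding Cn_def by blast
        thus ?thesis unfolding Suc by (simp only: e)
      qed
    qed
  qed
qed

lemma Cn_mono: "Cn (Suc n) \<phi> \<Longrightarrow> Cn n \<phi>" by (simp add: Cn_def)

lemma Cn_smooth: "(\<And>n. Cn n \<phi>) \<Longrightarrow> smooth_real \<phi>"
  unfolding smooth_real_def smooth_deriv_seq_def
  by (rule exI[of _ "\<lambda>k. (deriv^^k) \<phi>"]) (auto simp: Cn_def)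

lemma Cn_diff_deriv: "Cn (Suc n) \<phi> \<Longrightarrow> (\<phi> has_real_derivative deriv \<phi> x) (at x)"
  by (simp add: Cn_Suc)

lemma Cn_add: "Cn n f \<Longrightarrow> Cn n g \<Longrightarrow> Cn n (\<lambda>x. f x + g x)"
proof (induction n arbitrary: f g)
  case (Suc n)
  have df: "\<And>x. (f has_real_derivative deriv f x) (at x)" and dg: "\<And>x. (g has_real_derivative deriv g x) (at x)"
    using Suc.prems by (auto simp: Cn_Suc)
  have d: "\<And>x. ((\<lambda>x. f x + g x) has_real_derivative deriv f x + deriv g x) (at x)"
    by (intro DERIV_add df dg)
  have e: "deriv (\<lambda>x. f x + g x) = (\<lambda>x. deriv f x + deriv g x)"
    using d by (auto intro!: ext DERIV_imp_deriv)
  show ?case using Suc d e by (simp add: Cn_Suc)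
qed simp

lemma Cn_const: "Cn n (\<lambda>x. c)"
proof (induction n arbitrary: c)
  case (Suc n)
  have e: "deriv (\<lambda>x. c) = (\<lambda>x. 0)" by (auto intro!: ext DERIV_imp_deriv)
  show ?case using Suc by (simp add: Cn_Suc e)
qed simp

lemma Cn_mult: "Cn n f \<Longrightarrow> Cn n g \<Longrightarrow> Cn n (\<lambda>x. f x * g x)"
proof (induction n arbitrary: f g)
  case (Suc n)
  have df: "\<And>x. (f has_real_derivative deriv f x) (at x)" and dg: "\<And>x. (g has_real_derivative deriv g x) (at x)"
    using Suc.prems unfolding Cn_Suc by blast+
  have d: "((\<lambda>x. f x * g x) has_real_derivative deriv f x * g x + f x * deriv g x) (at x)" for x
    using DERIV_mult[OF df dg, of x] by (simp add: algebra_simps)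
  have e: "deriv (\<lambda>x. f x * g x) = (\<lambda>x. deriv f x * g x + f x * deriv g x)"
    using d by (intro ext DERIV_imp_deriv)
  have c: "Cn n (deriv f)" "Cn n (deriv g)" "Cn n f" "Cn n g"
    using Suc.prems Cn_mono[OF Suc.prems(1)] Cn_mono[OF Suc.prems(2)] unfolding Cn_Suc by blast+
  have "Cn n (\<lambda>x. deriv f x * g x)" by (rule Suc.IH[OF c(1) c(4)])
  moreover have "Cn n (\<lambda>x. f x * deriv g x)" by (rule Suc.IH[OF c(3) c(2)])
  ultimately have "Cn n (\<lambda>x. deriv f x * g x + f x * deriv g x)" by (rule Cn_add)
  thus ?case unfolding Cn_Suc e using d by blast
qed simp

definition sm_on :: "real set \<Rightarrow> (nat \<Rightarrow> real \<Rightarrow> real) \<Rightarrow> bool" where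
  "sm_on S D \<longleftrightarrow> (\<forall>k. \<forall>x\<in>S. (D k has_real_derivative D (Suc k) x) (at x))"

lemma Cn_comp: "sm_on S D \<Longrightarrow> (\<And>x. u x \<in> S) \<Longrightarrow> Cn n u \<Longrightarrow> Cn n (\<lambda>x. D 0 (u x))"
proof (induction n arbitrary: D)
  case (Suc n)
  have du: "\<And>x. (u has_real_derivative deriv u x) (at x)" using Suc.prems(3) unfolding Cn_Suc by blast
  have d: "((\<lambda>x. D 0 (u x)) has_real_derivative D (Suc 0) (u x) * deriv u x) (at x)" for x
  proof -
    have "(D 0 has_real_derivative D (Suc 0) (u x)) (at (u x))"
      using Suc.prems(1,2) unfolding sm_on_def by blast
    from DERIV_chain2[OF this du] show ?thesis .
  qed
  have e: "deriv (\<lambda>x. D 0 (u x)) = (\<lambda>x. D (Suc 0) (u x) * deriv u x)"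
    using d by (intro ext DERIV_imp_deriv)
  have s: "sm_on S (\<lambda>k. D (Suc k))" using Suc.prems(1) unfolding sm_on_def by blast
  have "Cn n (\<lambda>x. D (Suc 0) (u x))" using Suc.IH[OF s Suc.prems(2) Cn_mono[OF Suc.prems(3)]] .
  moreover have "Cn n (deriv u)" using Suc.prems(3) unfolding Cn_Suc by blast
  ultimately have c: "Cn n (\<lambda>x. D (Suc 0) (u x) * deriv u x)" by (rule Cn_mult)
  show ?case unfolding Cn_Suc e using d c by blast
qed simp

lemma Cn_ode:
  assumes d1: "\<And>x. (u has_real_derivative u1 x) (at x)"
    and d2: "\<And>x. (u1 has_real_derivative h x) (at x)"
    and boot: "\<And>n. Cn n u \<Longrightarrow> Cn n h"
  shows "Cn n u"
proof -
  have e1: "deriv u = u1" using d1 by (auto intro!: ext DERIV_imp_deriv)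
  have e2: "deriv u1 = h" using d2 by (auto intro!: ext DERIV_imp_deriv)
  have "Cn n u \<and> Cn (Suc n) u"
  proof (induction n)
    case 0 show ?case using d1 by (simp add: Cn_Suc e1)
  next
    case (Suc n)
    have "Cn n h" using Suc boot by simp
    hence "Cn (Suc (Suc n)) u" using d1 d2 by (simp add: Cn_Suc e1 e2)
    thus ?case using Suc by simp
  qed
  thus ?thesis by simp
qed

lemma sm_on_powr:
  fixes a r :: real
  shows "sm_on {x. x > -a} (\<lambda>k x. (\<Prod>i<k. (r - real i)) * (x + a) powr (r - real k))"
  unfolding sm_on_def
proof (intro allI ballI)
  fix k x assume x: "x \<in> {x. x > -a}"
  hence pos: "x + a > 0" by simp
  have "((\<lambda>x. (x + a) powr (r - real k)) has_real_derivative (r - real k) * (x + a) powr (r - real k - 1)) (at x)"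
    using pos by (auto intro!: derivative_eq_intros)
  hence "((\<lambda>x. (\<Prod>i<k. (r - real i)) * (x + a) powr (r - real k)) has_real_derivative
     (\<Prod>i<k. (r - real i)) * ((r - real k) * (x + a) powr (r - real k - 1))) (at x)"
    by (rule DERIV_cmult)
  thus "((\<lambda>x. (\<Prod>i<k. (r - real i)) * (x + a) powr (r - real k)) has_real_derivative
     (\<Prod>i<Suc k. (r - real i)) * (x + a) powr (r - real (Suc k))) (at x)"
    by (simp add: algebra_simps diff_diff_eq)
qed

lemma ustar_exists:
  fixes f f1 F :: "real \<Rightarrow> real" and a :: real
  assumes a: "a > 0"
    and dF: "\<And>u. u > -a \<Longrightarrow> (F has_real_derivative f u) (at u)"
    and df: "\<And>u. u > -a \<Longrightarrow> (f has_real_derivative f1 u) (at u)"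
    and mono: "\<And>x y. -a < x \<Longrightarrow> x < y \<Longrightarrow> f1 x < f1 y"
    and F0: "F 0 = 0" and f0: "f 0 = 0" and f10: "f1 0 > 0"
    and cont: "continuous_on {-a..0} F" and Fa: "F (-a) < 0"
  shows "\<exists>us. -a < us \<and> us < 0 \<and> F us = 0 \<and> f us > 0 \<and> (\<forall>u. us < u \<and> u < 0 \<longrightarrow> F u > 0)"
proof -
  obtain d where d: "d > 0" "\<And>h. h > 0 \<Longrightarrow> h < d \<Longrightarrow> f (0 - h) < f 0"
    using DERIV_pos_inc_left[OF df[of 0] f10] a by auto
  define e where "e = min d a / 2"
  have e: "e > 0" "e < d" "e < a" using d a by (auto simp: e_def)
  have fneg: "f x < 0" if "-d < x" "x < 0" for x
    using d(2)[of "-x"] that f0 by simp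
  have near: "F u > 0" if "-e \<le> u" "u < 0" for u
  proof -
    have "F u > F 0"
    proof (rule DERIV_neg_imp_decreasing_open[OF that(2)])
      fix x assume "u < x" "x < 0"
      thus "\<exists>y. (F has_real_derivative y) (at x) \<and> y < 0"
        using dF[of x] fneg[of x] that e by auto
    next
      show "continuous_on {u..0} F" by (rule continuous_on_subset[OF cont]) (use that e in auto)
    qed
    thus ?thesis using F0 by simp
  qed
  define S where "S = {x \<in> {-a..-e}. F x \<le> (\<lambda>x. 0) x}"
  have clS: "closed S" unfolding S_def
  proof (rule continuous_on_closed_Collect_le)
    show "continuous_on {-a..-e} F" by (rule continuous_on_subset[OF cont]) (use e in auto)
  qed auto
  have neS: "-a \<in> S" using Fa e by (simp add: S_def)
  have bdS: "bdd_above S" unfolding S_def by (rule bdd_aboveI[of _ "-e"]) auto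
  define us where "us = Sup S"
  have usS: "us \<in> S" unfolding us_def using closed_contains_Sup[OF _ bdS clS] neS by blast
  have us1: "-a \<le> us" "us \<le> -e" "F us \<le> 0" using usS by (auto simp: S_def)
  have pos: "F u > 0" if "us < u" "u < 0" for u
  proof (cases "u \<le> -e")
    case True
    show ?thesis
    proof (rule ccontr)
      assume "\<not> F u > 0"
      hence "u \<in> S" using True that us1 by (auto simp: S_def)
      hence "u \<le> us" unfolding us_def using bdS by (rule cSup_upper)
      thus False using that by simp
    qed
  next
    case False thus ?thesis using near that by simp
  qed
  have Fe: "F (-e) > 0" using near e by simp
  have Fus: "F us = 0"
  proof (rule ccontr)
    assume "F us \<noteq> 0"
    hence "F us < 0" using us1 by simp
    hence "us < -e" using Fe us1 by (cases "us = -e") auto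
    obtain x where x: "us \<le> x" "x \<le> -e" "F x = 0"
      using IVT'[of F us 0 "-e"] \<open>F us < 0\<close> Fe us1
        continuous_on_subset[OF cont, of "{us..-e}"] e by auto
    have "x \<noteq> us" using x \<open>F us < 0\<close> by auto
    hence "F x > 0" using pos[of x] x e by simp
    thus False using x by simp
  qed
  have usa: "-a < us" using Fus Fa us1 by (cases "us = -a") auto
  have uslt: "us < -e" using Fus Fe us1 by (cases "us = -e") auto
  have fus_ge: "f us \<ge> 0"
  proof (rule ccontr)
    assume "\<not> f us \<ge> 0"
    then obtain d2 where d2: "d2 > 0" "\<And>h. h > 0 \<Longrightarrow> h < d2 \<Longrightarrow> F us > F (us + h)"
      using DERIV_neg_dec_right[OF dF[OF usa]] by force
    define h where "h = min d2 (-e - us) / 2"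
    have h: "h > 0" "h < d2" "us + h < 0" using d2 uslt e unfolding h_def min_def by (auto split: if_splits) argo
    have "F (us + h) < 0" using d2(2)[OF h(1,2)] Fus by simp
    moreover have "F (us + h) > 0" using pos[of "us + h"] h by simp
    ultimately show False by simp
  qed
  have fus: "f us > 0"
  proof (rule ccontr)
    assume "\<not> f us > 0"
    hence fz: "f us = 0" using fus_ge by simp
    have fn: "f u < 0" if uu: "us < u" "u < 0" for u
    proof (rule ccontr)
      assume "\<not> f u < 0"
      hence fu: "f u \<ge> 0" by simp
      obtain x1 where x1: "us < x1" "x1 < u" "f u - f us = (u - us) * f1 x1"
        using MVT2[of us u f f1] uu df usa by force
      obtain x2 where x2: "u < x2" "x2 < 0" "f 0 - f u = (0 - u) * f1 x2"
        using MVT2[of u 0 f f1] uu df usa by force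
      have "(u - us) * f1 x1 \<ge> 0" using x1 fu fz by simp
      hence "f1 x1 \<ge> 0" using uu by (simp add: zero_le_mult_iff)
      moreover have "(0 - u) * f1 x2 \<le> 0" using x2 fu f0 by simp
      hence "f1 x2 \<le> 0" using uu by (simp add: zero_le_mult_iff)
      moreover have "f1 x1 < f1 x2" using mono[of x1 x2] x1 x2 usa by simp
      ultimately show False by simp
    qed
    have "F us > F 0"
    proof (rule DERIV_neg_imp_decreasing_open[of us 0 F])
      show "us < 0" using uslt e by simp
    next
      fix x assume "us < x" "x < 0"
      thus "\<exists>y. (F has_real_derivative y) (at x) \<and> y < 0"
        using dF[of x] fn[of x] usa by auto
    next
      show "continuous_on {us..0} F" by (rule continuous_on_subset[OF cont]) (use usa in auto)
    qed
    thus False using F0 Fus by simp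
  qed
  show ?thesis
    using usa uslt e Fus fus pos by (intro exI[of _ us]) auto
qed

lemma quad_deriv0:
  fixes P :: "real \<Rightarrow> real"
  assumes d: "d > 0" and b: "\<And>v. \<bar>v\<bar> < d \<Longrightarrow> \<bar>P v - P 0\<bar> \<le> C * v\<^sup>2"
  shows "(P has_real_derivative 0) (at 0)"
  unfolding DERIV_def
proof (rule Lim_null_comparison)
  have B: "norm ((P (0 + h) - P 0) / h) \<le> \<bar>C\<bar> * \<bar>h\<bar>" if h: "h \<noteq> 0" "dist h 0 < d" for h
  proof -
    have "\<bar>P h - P 0\<bar> \<le> C * h\<^sup>2" using b h by simp
    also have "\<dots> \<le> \<bar>C\<bar> * \<bar>h\<bar> * \<bar>h\<bar>" by (simp add: power2_eq_square abs_mult[symmetric])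
    finally have "\<bar>P h - P 0\<bar> \<le> \<bar>C\<bar> * \<bar>h\<bar> * \<bar>h\<bar>" .
    thus ?thesis
      using h by (simp add: divide_le_eq abs_divide)
  qed
  show "\<forall>\<^sub>F h in at 0. norm ((P (0 + h) - P 0) / h) \<le> \<bar>C\<bar> * \<bar>h\<bar>"
    unfolding eventually_at using B d by blast
  show "((\<lambda>h. \<bar>C\<bar> * \<bar>h\<bar>) \<longlongrightarrow> 0) (at 0)"
    by (rule tendsto_eq_intros | simp)+
qed

locale hom =
  fixes a us :: real and F f f1 :: "real \<Rightarrow> real"
  assumes a_pos: "a > 0"
    and dF: "\<And>u. u > -a \<Longrightarrow> (F has_real_derivative f u) (at u)"
    and df: "\<And>u. u > -a \<Longrightarrow> (f has_real_derivative f1 u) (at u)"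
    and mono: "\<And>x y. -a < x \<Longrightarrow> x < y \<Longrightarrow> f1 x < f1 y"
    and F0: "F 0 = 0" and f0: "f 0 = 0" and f10: "f1 0 > 0"
    and us_gt: "-a < us" and us_lt: "us < 0" and Fus: "F us = 0" and fus: "f us > 0"
    and Fpos: "\<And>u. us < u \<Longrightarrow> u < 0 \<Longrightarrow> F u > 0"
begin

lemma f1_le: "-a < x \<Longrightarrow> x \<le> y \<Longrightarrow> f1 x \<le> f1 y"
  using mono[of x y] by (cases "x = y") auto

definition L where "L = \<bar>f1 us\<bar> + \<bar>f1 0\<bar>"

lemma f1_bound: "us \<le> x \<Longrightarrow> x \<le> 0 \<Longrightarrow> \<bar>f1 x\<bar> \<le> L"
  using f1_le[of us x] f1_le[of x 0] us_gt unfolding L_def by auto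

lemma dFs: "-a < us + t \<Longrightarrow> ((\<lambda>t. F (us + t)) has_real_derivative f (us + t)) (at t)"
  using DERIV_shift[of F "f (us + t)" t us] dF[of "us + t"] by (simp add: add.commute)

lemma dfs: "-a < us + t \<Longrightarrow> ((\<lambda>t. f (us + t)) has_real_derivative f1 (us + t)) (at t)"
  using DERIV_shift[of f "f1 (us + t)" t us] df[of "us + t"] by (simp add: add.commute)

lemma f_lip: assumes t: "0 \<le> t" "t \<le> -us" shows "\<bar>f (us + t) - f us\<bar> \<le> L * t"
proof (cases "t = 0")
  case False
  hence "0 < t" using t by simp
  then obtain z where z: "0 < z" "z < t" "f (us + t) - f (us + 0) = (t - 0) * f1 (us + z)"
    using MVT2[of 0 t "\<lambda>t. f (us + t)" "\<lambda>t. f1 (us + t)"] dfs us_gt t by force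
  have "\<bar>f1 (us + z)\<bar> \<le> L" using f1_bound[of "us + z"] z t by simp
  thus ?thesis using z t by (simp add: abs_mult mult.commute mult_left_mono)
qed simp

lemma F_taylor: assumes t: "0 \<le> t" "t \<le> -us"
  shows "\<bar>F (us + t) - f us * t\<bar> \<le> L / 2 * t\<^sup>2"
proof -
  have "(\<lambda>t. F (us + t) - f us * t - L / 2 * t\<^sup>2) t \<le> (\<lambda>t. F (us + t) - f us * t - L / 2 * t\<^sup>2) 0"
  proof (rule DERIV_nonpos_imp_nonincreasing[OF t(1)])
    fix x assume x: "0 \<le> x" "x \<le> t"
    have "((\<lambda>t. F (us + t) - f us * t - L / 2 * t\<^sup>2) has_real_derivative f (us + x) - f us - L * x) (at x)"
      using dFs[of x] x t us_gt by (auto intro!: derivative_eq_intros)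
    moreover have "f (us + x) - f us - L * x \<le> 0" using f_lip[of x] x t by simp
    ultimately show "\<exists>y. ((\<lambda>t. F (us + t) - f us * t - L / 2 * t\<^sup>2) has_real_derivative y) (at x) \<and> y \<le> 0" by blast
  qed
  moreover have "(\<lambda>t. F (us + t) - f us * t + L / 2 * t\<^sup>2) 0 \<le> (\<lambda>t. F (us + t) - f us * t + L / 2 * t\<^sup>2) t"
  proof (rule DERIV_nonneg_imp_nondecreasing[OF t(1)])
    fix x assume x: "0 \<le> x" "x \<le> t"
    have "((\<lambda>t. F (us + t) - f us * t + L / 2 * t\<^sup>2) has_real_derivative f (us + x) - f us + L * x) (at x)"
      using dFs[of x] x t us_gt by (auto intro!: derivative_eq_intros)
    moreover have "f (us + x) - f us + L * x \<ge> 0" using f_lip[of x] x t by simp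
    ultimately show "\<exists>y. ((\<lambda>t. F (us + t) - f us * t + L / 2 * t\<^sup>2) has_real_derivative y) (at x) \<and> y \<ge> 0" by blast
  qed
  ultimately have "F (us + t) - f us * t - L / 2 * t\<^sup>2 \<le> 0" "F (us + t) - f us * t + L / 2 * t\<^sup>2 \<ge> 0"
    using Fus by simp_all
  thus ?thesis unfolding abs_le_iff by linarith
qed

lemma F_upper: assumes u: "-a < u" "u \<le> 0" shows "F u \<le> f1 0 / 2 * u\<^sup>2"
proof -
  have fl: "f x \<ge> f1 0 * x" if x: "u \<le> x" "x \<le> 0" for x
  proof -
    have "(\<lambda>x. f x - f1 0 * x) x \<ge> (\<lambda>x. f x - f1 0 * x) 0"
    proof (rule DERIV_nonpos_imp_nonincreasing[OF x(2)])
      fix y assume y: "x \<le> y" "y \<le> 0"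
      have "((\<lambda>x. f x - f1 0 * x) has_real_derivative f1 y - f1 0) (at y)"
        using df[of y] y x u by (auto intro!: derivative_eq_intros)
      moreover have "f1 y \<le> f1 0" using f1_le[of y 0] y x u by simp
      ultimately show "\<exists>z. ((\<lambda>x. f x - f1 0 * x) has_real_derivative z) (at y) \<and> z \<le> 0"
        by (intro exI[of _ "f1 y - f1 0"]) simp
    qed
    thus ?thesis using f0 by simp
  qed
  have "(\<lambda>x. F x - f1 0 / 2 * x\<^sup>2) u \<le> (\<lambda>x. F x - f1 0 / 2 * x\<^sup>2) 0"
  proof (rule DERIV_nonneg_imp_nondecreasing[OF u(2)])
    fix y assume y: "u \<le> y" "y \<le> 0"
    have "((\<lambda>x. F x - f1 0 / 2 * x\<^sup>2) has_real_derivative f y - f1 0 * y) (at y)"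
      using dF[of y] y u by (auto intro!: derivative_eq_intros)
    moreover have "f y - f1 0 * y \<ge> 0" using fl[OF y] by simp
    ultimately show "\<exists>z. ((\<lambda>x. F x - f1 0 / 2 * x\<^sup>2) has_real_derivative z) (at y) \<and> z \<ge> 0" by blast
  qed
  thus ?thesis using F0 by simp
qed


definition c where "c = sqrt (-us)"

lemma c_pos: "c > 0" using us_lt by (simp add: c_def)
lemma c2: "c\<^sup>2 = -us" using us_lt by (simp add: c_def)

lemma sq_lt: "\<bar>v\<bar> < c \<Longrightarrow> v\<^sup>2 < -us"
proof -
  assume "\<bar>v\<bar> < c"
  hence "\<bar>v\<bar>\<^sup>2 < c\<^sup>2" by (intro power_strict_mono) auto
  thus ?thesis using c2 by simp
qed

definition P where "P v = (if v = 0 then f us / 2 else F (us + v\<^sup>2) / (2 * v\<^sup>2))"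
definition P1 where "P1 v = (if v = 0 then 0 else f (us + v\<^sup>2) / v - F (us + v\<^sup>2) / v ^ 3)"

lemma P_pos: assumes "\<bar>v\<bar> < c" shows "P v > 0"
proof (cases "v = 0")
  case True thus ?thesis using fus by (simp add: P_def)
next
  case False
  have "F (us + v\<^sup>2) > 0" using Fpos[of "us + v\<^sup>2"] sq_lt[OF assms] False by simp
  thus ?thesis using False by (simp add: P_def)
qed

lemma P_id: "2 * P v + v * P1 v = f (us + v\<^sup>2)"
  by (cases "v = 0") (auto simp: P_def P1_def field_simps power2_eq_square power3_eq_cube)

lemma P_deriv: assumes v: "\<bar>v\<bar> < c" shows "(P has_real_derivative P1 v) (at v)"
proof (cases "v = 0")
  case True
  have "(P has_real_derivative 0) (at 0)"
  proof (rule quad_deriv0[OF c_pos])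
    fix x :: real assume x: "\<bar>x\<bar> < c"
    show "\<bar>P x - P 0\<bar> \<le> L / 4 * x\<^sup>2"
    proof (cases "x = 0")
      case False
      have t: "\<bar>F (us + x\<^sup>2) - f us * x\<^sup>2\<bar> \<le> L / 2 * (x\<^sup>2)\<^sup>2"
        using F_taylor[of "x\<^sup>2"] sq_lt[OF x] by simp
      have "P x - P 0 = (F (us + x\<^sup>2) - f us * x\<^sup>2) / (2 * x\<^sup>2)"
        using False by (simp add: P_def field_simps)
      hence "\<bar>P x - P 0\<bar> = \<bar>F (us + x\<^sup>2) - f us * x\<^sup>2\<bar> / (2 * x\<^sup>2)"
        by (simp add: abs_divide)
      also have "\<dots> \<le> (L / 2 * (x\<^sup>2)\<^sup>2) / (2 * x\<^sup>2)"
        using t False by (intro divide_right_mono) auto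
      also have "\<dots> = L / 4 * x\<^sup>2" using False by (simp add: field_simps power2_eq_square)
      finally show ?thesis .
    qed (simp add: P_def)
  qed
  thus ?thesis using True by (simp add: P1_def)
next
  case False
  have dA: "((\<lambda>v. F (us + v\<^sup>2)) has_real_derivative f (us + v\<^sup>2) * (2 * v)) (at v)"
  proof (rule DERIV_chain2[of F])
    have "-a < us + v\<^sup>2" using us_gt zero_le_power2[of v] by linarith
    thus "(F has_real_derivative f (us + v\<^sup>2)) (at (us + v\<^sup>2))" by (rule dF)
    show "((\<lambda>v. us + v\<^sup>2) has_real_derivative 2 * v) (at v)"
      by (auto intro!: derivative_eq_intros)
  qed
  have dB: "((\<lambda>v. 2 * v\<^sup>2) has_real_derivative 2 * (2 * v)) (at v)"
    by (auto intro!: derivative_eq_intros)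
  have dQ: "((\<lambda>v. F (us + v\<^sup>2) / (2 * v\<^sup>2)) has_real_derivative
      (f (us + v\<^sup>2) * (2 * v) * (2 * v\<^sup>2) - F (us + v\<^sup>2) * (2 * (2 * v))) / (2 * v\<^sup>2 * (2 * v\<^sup>2))) (at v)"
    using DERIV_divide[OF dA dB] False by simp
  have eq: "(f (us + v\<^sup>2) * (2 * v) * (2 * v\<^sup>2) - F (us + v\<^sup>2) * (2 * (2 * v))) / (2 * v\<^sup>2 * (2 * v\<^sup>2)) = P1 v"
    using False by (simp add: P1_def field_simps power2_eq_square power3_eq_cube)
  show ?thesis
  proof (rule has_field_derivative_transform_within_open[of _ _ v "UNIV - {0}"])
    show "((\<lambda>v. F (us + v\<^sup>2) / (2 * v\<^sup>2)) has_real_derivative P1 v) (at v)" using dQ eq by simp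
  qed (auto simp: P_def False)
qed

definition G where "G v = sqrt (P v)"

lemma G_pos: "\<bar>v\<bar> < c \<Longrightarrow> G v > 0" using P_pos by (simp add: G_def)

lemma G_sq: "\<bar>v\<bar> < c \<Longrightarrow> G v * G v = P v" using P_pos[of v] by (simp add: G_def)

lemma G_deriv: assumes v: "\<bar>v\<bar> < c" shows "(G has_real_derivative P1 v / (2 * G v)) (at v)"
proof -
  have "((\<lambda>v. sqrt (P v)) has_real_derivative inverse (sqrt (P v)) / 2 * P1 v) (at v)"
    by (rule DERIV_chain2[OF DERIV_real_sqrt[OF P_pos[OF v]] P_deriv[OF v]])
  thus ?thesis by (simp add: G_def[abs_def] G_def field_simps)
qed

lemma P_upper: assumes v: "c / 2 \<le> \<bar>v\<bar>" "\<bar>v\<bar> < c" shows "P v \<le> 4 * f1 0 * (c - \<bar>v\<bar>)\<^sup>2"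
proof -
  define w where "w = \<bar>v\<bar>"
  have w: "c / 2 \<le> w" "w < c" "w > 0" using v c_pos by (auto simp: w_def)
  have v0: "v \<noteq> 0" using w w_def by auto
  have vw: "v\<^sup>2 = w\<^sup>2" by (simp add: w_def)
  have u: "us + v\<^sup>2 = -((c - w) * (c + w))" using c2 vw by (simp add: algebra_simps power2_eq_square)
  have Fu: "F (us + v\<^sup>2) \<le> f1 0 / 2 * ((c - w) * (c + w))\<^sup>2"
  proof -
    have h: "-a < us + v\<^sup>2" using us_gt zero_le_power2[of v] by linarith
    have "us + v\<^sup>2 \<le> 0" using sq_lt[OF v(2)] by simp
    from F_upper[OF h this] show ?thesis unfolding u by simp
  qed
  have "P v = F (us + v\<^sup>2) / (2 * w\<^sup>2)" using v0 vw by (simp add: P_def)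
  also have "\<dots> \<le> (f1 0 / 2 * ((c - w) * (c + w))\<^sup>2) / (2 * w\<^sup>2)"
    using Fu w by (intro divide_right_mono) auto
  also have "\<dots> \<le> 4 * f1 0 * (c - w)\<^sup>2"
  proof -
    have "(c + w)\<^sup>2 \<le> (4 * w)\<^sup>2" using w by (intro power_mono) auto
    hence "f1 0 * (c - w)\<^sup>2 * (c + w)\<^sup>2 \<le> f1 0 * (c - w)\<^sup>2 * (16 * w\<^sup>2)"
      using f10 by (intro mult_left_mono) (auto simp: power2_eq_square)
    have "(f1 0 / 2 * ((c - w) * (c + w))\<^sup>2) / (2 * w\<^sup>2) = f1 0 * (c - w)\<^sup>2 * (c + w)\<^sup>2 / (4 * w\<^sup>2)"
      by (simp only: power_mult_distrib)
    also have "\<dots> \<le> f1 0 * (c - w)\<^sup>2 * (16 * w\<^sup>2) / (4 * w\<^sup>2)"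
      by (rule divide_right_mono[OF \<open>f1 0 * (c - w)\<^sup>2 * (c + w)\<^sup>2 \<le> f1 0 * (c - w)\<^sup>2 * (16 * w\<^sup>2)\<close>]) simp
    also have "\<dots> = 4 * f1 0 * (c - w)\<^sup>2" using w by (simp add: field_simps)
    finally show ?thesis .
  qed
  finally show ?thesis by (simp add: w_def)
qed

lemma G_upper: assumes v: "c / 2 \<le> \<bar>v\<bar>" "\<bar>v\<bar> < c" shows "G v \<le> 2 * sqrt (f1 0) * (c - \<bar>v\<bar>)"
proof -
  have "G v \<le> sqrt (4 * f1 0 * (c - \<bar>v\<bar>)\<^sup>2)" unfolding G_def using P_upper[OF v] by simp
  also have "\<dots> = 2 * sqrt (f1 0) * (c - \<bar>v\<bar>)" using v f10
    by (simp add: real_sqrt_mult)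
  finally show ?thesis .
qed

end

context hom begin

definition g where "g v = 1 / G v"

lemma G_cont_at: "\<bar>v\<bar> < c \<Longrightarrow> isCont G v"
  using G_deriv DERIV_isCont by blast

lemma g_cont: assumes b: "b < c" shows "continuous_on {-b..b} g"
proof -
  have "continuous_on {-b..b} G"
    by (rule continuous_at_imp_continuous_on) (use G_cont_at b in auto)
  moreover have "\<forall>x\<in>{-b..b}. G x \<noteq> 0"
  proof
    fix x assume "x \<in> {-b..b}"
    hence "\<bar>x\<bar> < c" using b by auto
    thus "G x \<noteq> 0" using G_pos[of x] by simp
  qed
  ultimately show ?thesis unfolding g_def[abs_def]
    by (intro continuous_on_divide continuous_on_const) auto
qed

definition Z where "Z v = integral {0..v} g - integral {v..0} g"

lemma Z_eq: assumes b: "0 \<le> b" "b < c" and v: "-b \<le> v" "v \<le> b"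
  shows "Z v = integral {-b..v} g - integral {-b..0} g"
proof -
  have int: "g integrable_on {-b..b}" by (rule integrable_continuous_interval[OF g_cont[OF b(2)]])
  show ?thesis
  proof (cases "v \<ge> 0")
    case True
    have "integral {v..0} g = 0"
    proof (cases "v = 0")
      case False hence "{v..0} = {}" using True by auto
      thus ?thesis by simp
    qed simp
    moreover have "integral {-b..0} g + integral {0..v} g = integral {-b..v} g"
      by (rule Henstock_Kurzweil_Integration.integral_combine)
        (use True b v in \<open>auto intro: integrable_subinterval_real[OF int]\<close>)
    ultimately show ?thesis unfolding Z_def by simp
  next
    case False
    have "{0..v} = {}" using False by auto
    hence "integral {0..v} g = 0" by simp
    moreover have "integral {-b..v} g + integral {v..0} g = integral {-b..0} g"
      by (rule Henstock_Kurzweil_Integration.integral_combine)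
        (use False b v in \<open>auto intro: integrable_subinterval_real[OF int]\<close>)
    ultimately show ?thesis unfolding Z_def by simp
  qed
qed

lemma Z_deriv: assumes v: "\<bar>v\<bar> < c" shows "(Z has_real_derivative g v) (at v)"
proof -
  define b where "b = (\<bar>v\<bar> + c) / 2"
  have b1: "0 \<le> b" using v unfolding b_def by simp
  have b2: "b < c" using v unfolding b_def by simp
  have "(\<bar>v\<bar> + c) / 2 > \<bar>v\<bar>" using v by simp
  hence b3: "-b < v" using abs_ge_minus_self[of v] unfolding b_def by linarith
  have b4: "v < b" using \<open>(\<bar>v\<bar> + c) / 2 > \<bar>v\<bar>\<close> abs_ge_self[of v] unfolding b_def by linarith
  note b = b1 b2 b3 b4
  have "((\<lambda>x. integral {-b..x} g) has_real_derivative g v) (at v within {-b..b})"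
    by (rule integral_has_real_derivative[OF g_cont[OF b(2)]]) (use b in auto)
  moreover have "at v within {-b..b} = at v"
    by (rule at_within_interior) (use b in auto)
  ultimately have "((\<lambda>x. integral {-b..x} g) has_real_derivative g v) (at v)" by simp
  hence d: "((\<lambda>x. integral {-b..x} g - integral {-b..0} g) has_real_derivative g v) (at v)"
    using DERIV_diff[OF _ DERIV_const] by fastforce
  show ?thesis
  proof (rule has_field_derivative_transform_within_open[OF d, of "{-b<..<b}"])
    fix x assume "x \<in> {-b<..<b}"
    thus "integral {-b..x} g - integral {-b..0} g = Z x" using Z_eq[of b x] b by auto
  qed (use b in auto)
qed

lemma g_pos: "\<bar>v\<bar> < c \<Longrightarrow> g v > 0" using G_pos by (simp add: g_def)

lemma Z_mono: assumes "-c < x" "x < y" "y < c" shows "Z x < Z y"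
proof (rule DERIV_pos_imp_increasing[OF assms(2)])
  fix t assume "x \<le> t" "t \<le> y"
  hence t: "\<bar>t\<bar> < c" using assms by auto
  show "\<exists>l. (Z has_real_derivative l) (at t) \<and> l > 0"
    using Z_deriv[OF t] g_pos[OF t] by blast
qed

lemma Z_0: "Z 0 = 0" by (simp add: Z_def)

definition K where "K = 2 * sqrt (f1 0)"
lemma K_pos: "K > 0" using f10 by (simp add: K_def)

lemma Z_low: assumes v: "c / 2 \<le> v" "v < c"
  shows "Z v \<ge> Z (c / 2) + (ln (c / 2) - ln (c - v)) / K"
proof -
  have "(\<lambda>x. Z x + ln (c - x) / K) (c / 2) \<le> (\<lambda>x. Z x + ln (c - x) / K) v"
  proof (rule DERIV_nonneg_imp_nondecreasing[OF v(1)])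
    fix x assume x: "c / 2 \<le> x" "x \<le> v"
    hence xa: "\<bar>x\<bar> < c" "c / 2 \<le> \<bar>x\<bar>" "x < c" "\<bar>x\<bar> = x" using v c_pos by auto
    have l: "((\<lambda>x. ln (c - x)) has_real_derivative (- 1 / (c - x))) (at x)"
      using xa by (auto intro!: derivative_eq_intros simp: field_simps)
    have "((\<lambda>x. Z x + ln (c - x) / K) has_real_derivative g x + (- 1 / (c - x)) / K) (at x)"
      by (rule DERIV_add[OF Z_deriv[OF xa(1)] DERIV_cdivide[OF l]])
    moreover have "g x - 1 / (K * (c - x)) \<ge> 0"
    proof -
      have "G x \<le> K * (c - x)" using G_upper[OF xa(2,1)] xa by (simp add: K_def)
      hence "1 / (K * (c - x)) \<le> 1 / G x"
        using G_pos[OF xa(1)] by (intro divide_left_mono) auto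
      thus ?thesis by (simp add: g_def)
    qed
    ultimately show "\<exists>y. ((\<lambda>x. Z x + ln (c - x) / K) has_real_derivative y) (at x) \<and> y \<ge> 0"
      by (intro exI[of _ "g x + (- 1 / (c - x)) / K"]) (auto simp: field_simps)
  qed
  thus ?thesis unfolding diff_divide_distrib by simp
qed

lemma Z_high: assumes v: "-c < v" "v \<le> -c / 2"
  shows "Z v \<le> Z (-c / 2) - (ln (c / 2) - ln (c + v)) / K"
proof -
  have "(\<lambda>x. Z x - ln (c + x) / K) v \<le> (\<lambda>x. Z x - ln (c + x) / K) (-c / 2)"
  proof (rule DERIV_nonneg_imp_nondecreasing[OF v(2)])
    fix x assume x: "v \<le> x" "x \<le> -c / 2"
    hence xa: "\<bar>x\<bar> < c" "c / 2 \<le> \<bar>x\<bar>" "-c < x" "\<bar>x\<bar> = -x" "c + x > 0" using v c_pos by auto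
    have l: "((\<lambda>x. ln (c + x)) has_real_derivative (1 / (c + x))) (at x)"
      using xa by (auto intro!: derivative_eq_intros simp: field_simps)
    have "((\<lambda>x. Z x - ln (c + x) / K) has_real_derivative g x - (1 / (c + x)) / K) (at x)"
      by (rule DERIV_diff[OF Z_deriv[OF xa(1)] DERIV_cdivide[OF l]])
    moreover have "g x - 1 / (K * (c + x)) \<ge> 0"
    proof -
      have "G x \<le> K * (c + x)" using G_upper[OF xa(2,1)] xa by (simp add: K_def)
      hence "1 / (K * (c + x)) \<le> 1 / G x"
        using G_pos[OF xa(1)] by (intro divide_left_mono) auto
      thus ?thesis by (simp add: g_def)
    qed
    ultimately show "\<exists>y. ((\<lambda>x. Z x - ln (c + x) / K) has_real_derivative y) (at x) \<and> y \<ge> 0"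
      by (intro exI[of _ "g x - (1 / (c + x)) / K"]) (auto simp: field_simps)
  qed
  moreover have "c + - c / 2 = c / 2" by simp
  ultimately show ?thesis unfolding diff_divide_distrib by simp
qed

end

context hom begin

lemma Z_cont: assumes "-c < x" "y < c" shows "continuous_on {x..y} Z"
proof (rule continuous_at_imp_continuous_on, rule ballI)
  fix t assume "t \<in> {x..y}"
  hence "\<bar>t\<bar> < c" using assms by (auto simp: abs_less_iff)
  thus "isCont Z t" by (rule DERIV_isCont[OF Z_deriv])
qed

lemma Z_mono': "\<bar>x\<bar> < c \<Longrightarrow> \<bar>y\<bar> < c \<Longrightarrow> x < y \<Longrightarrow> Z x < Z y"
  by (rule Z_mono) (auto simp: abs_less_iff)

lemma Z_surj: "\<exists>v. \<bar>v\<bar> < c \<and> Z v = y"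
proof (cases "y \<ge> 0")
  case True
  define m where "m = max 0 (y - Z (c / 2))"
  define v1 where "v1 = c - (c / 2) * exp (- K * m)"
  have m: "m \<ge> 0" "m \<ge> y - Z (c / 2)" by (auto simp: m_def)
  have e: "exp (- K * m) \<le> 1" "exp (- K * m) > 0" using m K_pos by auto
  have v1: "c / 2 \<le> v1" "v1 < c" using e c_pos unfolding v1_def by (auto simp: field_simps)
  have cv1: "c - v1 = (c / 2) * exp (- K * m)" by (simp add: v1_def)
  have "ln (c - v1) = ln (c / 2) + ln (exp (- K * m))"
    unfolding cv1 by (rule ln_mult_pos) (use c_pos in auto)
  hence "ln (c - v1) = ln (c / 2) - K * m" by simp
  hence "Z v1 \<ge> Z (c / 2) + m" using Z_low[OF v1] K_pos by simp
  hence zv1: "Z v1 \<ge> y" using m by simp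
  obtain v where v: "0 \<le> v" "v \<le> v1" "Z v = y"
    using IVT'[of Z 0 y v1] Z_0 True zv1 v1 c_pos Z_cont[of 0 v1] by auto
  show ?thesis using v v1 by (intro exI[of _ v]) auto
next
  case False
  define m where "m = max 0 (Z (- c / 2) - y)"
  define v1 where "v1 = - c + (c / 2) * exp (- K * m)"
  have m: "m \<ge> 0" "m \<ge> Z (- c / 2) - y" by (auto simp: m_def)
  have e: "exp (- K * m) \<le> 1" "exp (- K * m) > 0" using m K_pos by auto
  have v1: "-c < v1" "v1 \<le> - c / 2" using e c_pos unfolding v1_def by (auto simp: field_simps)
  have cv1: "c + v1 = (c / 2) * exp (- K * m)" by (simp add: v1_def)
  have "ln (c + v1) = ln (c / 2) + ln (exp (- K * m))"
    unfolding cv1 by (rule ln_mult_pos) (use c_pos in auto)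
  hence "ln (c + v1) = ln (c / 2) - K * m" by simp
  hence "Z v1 \<le> Z (- c / 2) - m" using Z_high[OF v1] K_pos by simp
  hence zv1: "Z v1 \<le> y" using m by simp
  obtain v where v: "v1 \<le> v" "v \<le> 0" "Z v = y"
    using IVT'[of Z v1 y 0] Z_0 False zv1 v1 c_pos Z_cont[of v1 0] by auto
  show ?thesis using v v1 by (intro exI[of _ v]) auto
qed

lemma Z_inj: "\<bar>x\<bar> < c \<Longrightarrow> \<bar>y\<bar> < c \<Longrightarrow> Z x = Z y \<Longrightarrow> x = y"
  using Z_mono'[of x y] Z_mono'[of y x] by (cases x y rule: linorder_cases) auto

definition V where "V y = (THE v. \<bar>v\<bar> < c \<and> Z v = y)"

lemma V_prop: "\<bar>V y\<bar> < c \<and> Z (V y) = y"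
proof -
  have "\<exists>!v. \<bar>v\<bar> < c \<and> Z v = y" using Z_surj Z_inj by blast
  thus ?thesis unfolding V_def by (rule theI')
qed

lemma V_Z: "\<bar>v\<bar> < c \<Longrightarrow> V (Z v) = v"
  using V_prop[of "Z v"] Z_inj by blast

lemma V_cont: "isCont V y"
proof -
  define x where "x = V y"
  have x: "\<bar>x\<bar> < c" using V_prop by (simp add: x_def)
  define d where "d = (c - \<bar>x\<bar>) / 2"
  have d: "d > 0" using x by (simp add: d_def)
  have in_: "\<bar>z\<bar> < c" if "\<bar>z - x\<bar> \<le> d" for z
  proof -
    have "\<bar>z\<bar> \<le> \<bar>z - x\<bar> + \<bar>x\<bar>" using abs_triangle_ineq[of "z - x" x] by simp
    moreover have "\<And>A B C::real. A \<le> B + C \<Longrightarrow> B \<le> (c - C) / 2 \<Longrightarrow> C < c \<Longrightarrow> A < c" by (simp add: field_simps)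
    ultimately show ?thesis using that x unfolding d_def by blast
  qed
  have "isCont V (Z x)"
    by (rule isCont_inverse_function[OF d]) (auto intro: V_Z DERIV_isCont Z_deriv in_)
  thus ?thesis using V_prop by (simp add: x_def)
qed

lemma V_deriv: "(V has_real_derivative G (V y)) (at y)"
proof -
  have x: "\<bar>V y\<bar> < c" using V_prop by simp
  have "(V has_real_derivative inverse (g (V y))) (at y)"
    by (rule DERIV_inverse_function[OF Z_deriv[OF x] _ _ _ _ V_cont, of "y - 1" "y + 1"])
      (use g_pos[OF x] V_prop in auto)
  thus ?thesis by (simp add: g_def)
qed

lemma V_mono_le: assumes "\<bar>a'\<bar> < c" "y \<ge> Z a'" shows "V y \<ge> a'"
proof (rule ccontr)
  assume "\<not> V y \<ge> a'"
  hence "Z (V y) < Z a'" using Z_mono'[of "V y" a'] V_prop[of y] assms by auto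
  thus False using V_prop[of y] assms by simp
qed

lemma V_mono_ge: assumes "\<bar>a'\<bar> < c" "y \<le> Z a'" shows "V y \<le> a'"
proof (rule ccontr)
  assume "\<not> V y \<le> a'"
  hence "Z a' < Z (V y)" using Z_mono'[of a' "V y"] V_prop[of y] assms by auto
  thus False using V_prop[of y] assms by simp
qed

lemma V_top: "(V \<longlongrightarrow> c) at_top"
proof (rule order_tendstoI)
  fix a assume a: "a < c"
  define a' where "a' = (max a 0 + c) / 2"
  have a': "\<bar>a'\<bar> < c" "a < a'" using a c_pos by (auto simp: a'_def)
  show "\<forall>\<^sub>F x in at_top. a < V x"
    unfolding eventually_at_top_linorder
    using V_mono_le[OF a'(1)] a'(2) by (intro exI[of _ "Z a'"]) (auto intro: less_le_trans)
next
  fix a assume "c < a"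
  have "V x < a" for x using V_prop[of x] \<open>c < a\<close> by (simp add: abs_less_iff)
  thus "\<forall>\<^sub>F x in at_top. V x < a" by (intro always_eventually) auto
qed

lemma V_bot: "(V \<longlongrightarrow> -c) at_bot"
proof (rule order_tendstoI)
  fix a assume a: "a < -c"
  have "a < V x" for x using V_prop[of x] a by (simp add: abs_less_iff)
  thus "\<forall>\<^sub>F x in at_bot. a < V x" by (intro always_eventually) auto
next
  fix a assume a: "-c < a"
  define a' where "a' = (min a 0 - c) / 2"
  have a': "\<bar>a'\<bar> < c" "a' < a" using a c_pos by (auto simp: a'_def)
  show "\<forall>\<^sub>F x in at_bot. V x < a"
    unfolding eventually_at_bot_linorder
    using V_mono_ge[OF a'(1)] a'(2) by (intro exI[of _ "Z a'"]) (auto intro: le_less_trans)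
qed

end

context hom begin

definition u where "u z = us + (V z)\<^sup>2"
definition u1 where "u1 z = 2 * V z * G (V z)"

lemma u_deriv: "(u has_real_derivative u1 z) (at z)"
proof -
  have "((\<lambda>z. us + (V z)\<^sup>2) has_real_derivative 2 * V z * G (V z)) (at z)"
    using V_deriv[of z] by (auto intro!: derivative_eq_intros)
  thus ?thesis unfolding u_def[abs_def] u1_def by simp
qed

lemma u1_deriv: "(u1 has_real_derivative f (u z)) (at z)"
proof -
  have x: "\<bar>V z\<bar> < c" using V_prop by simp
  have dG: "((\<lambda>z. G (V z)) has_real_derivative P1 (V z) / (2 * G (V z)) * G (V z)) (at z)"
    by (rule DERIV_chain2[OF G_deriv[OF x] V_deriv])
  have d: "((\<lambda>z. 2 * V z * G (V z)) has_real_derivative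
      2 * G (V z) * G (V z) + 2 * V z * (P1 (V z) / (2 * G (V z)) * G (V z))) (at z)"
    using DERIV_mult[OF DERIV_cmult[OF V_deriv, of 2] dG] by (simp add: algebra_simps)
  have "2 * G (V z) * G (V z) + 2 * V z * (P1 (V z) / (2 * G (V z)) * G (V z)) = 2 * P (V z) + V z * P1 (V z)"
    using G_sq[OF x] G_pos[OF x] by (simp add: field_simps)
  also have "\<dots> = f (u z)" using P_id by (simp add: u_def)
  finally show ?thesis using d unfolding u1_def[abs_def] by simp
qed

lemma u_range: "us \<le> u z \<and> u z < 0"
proof -
  have "(V z)\<^sup>2 < -us" using sq_lt V_prop by blast
  thus ?thesis by (simp add: u_def)
qed

lemma u_top: "(u \<longlongrightarrow> 0) at_top"
proof -
  have "((\<lambda>z. us + (V z)\<^sup>2) \<longlongrightarrow> us + c\<^sup>2) at_top" by (intro tendsto_intros V_top)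
  thus ?thesis using c2 by (simp add: u_def[abs_def])
qed

lemma u_bot: "(u \<longlongrightarrow> 0) at_bot"
proof -
  have "((\<lambda>z. us + (V z)\<^sup>2) \<longlongrightarrow> us + (-c)\<^sup>2) at_bot" by (intro tendsto_intros V_bot)
  thus ?thesis using c2 by (simp add: u_def[abs_def])
qed

lemma core: "\<exists>u u1. (\<forall>z. us \<le> u z \<and> u z < 0) \<and> (\<forall>z. (u has_real_derivative u1 z) (at z)) \<and>
   (\<forall>z. (u1 has_real_derivative f (u z)) (at z)) \<and> (u \<longlongrightarrow> 0) at_top \<and> (u \<longlongrightarrow> 0) at_bot"
  using u_range u_deriv u1_deriv u_top u_bot by blast

end

theorem mainTheorem1:
  fixes \<beta> \<nu> \<kappa> \<gamma> \<eta>inf s :: real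
  assumes "\<beta> > 0" and "\<nu> > -1" and "\<kappa> > 0" and "\<gamma> = \<beta> / (\<nu> + 2)" and "\<eta>inf > 0"
    and "\<beta> * (\<nu> + 1) / (2 * (\<nu> + 2) * \<eta>inf powr (\<nu> + 3)) < s\<^sup>2"
    and "s\<^sup>2 < \<beta> / \<eta>inf powr (\<nu> + 3)"
  shows "\<exists>w \<eta> :: real \<Rightarrow> real.
           smooth_real w \<and> smooth_real \<eta> \<and>
           (\<forall>z. \<eta> z > 0) \<and>
           \<not> (\<exists>c. \<forall>z. \<eta> z = c) \<and>
           (\<forall>z. s * w z + \<eta>inf powr (-(\<nu> + 2)) - \<eta> z powr (-(\<nu> + 2)) = 0) \<and>
           (\<forall>z. \<gamma> * w z - \<kappa> * deriv (deriv w) z + s * (\<eta> z - \<eta>inf) = 0) \<and>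
           (\<eta> \<longlongrightarrow> \<eta>inf) at_top \<and> (\<eta> \<longlongrightarrow> \<eta>inf) at_bot \<and>
           (w \<longlongrightarrow> 0) at_top \<and> (w \<longlongrightarrow> 0) at_bot \<and>
           (\<forall>z. \<eta> z > \<eta>inf)"
proof -
  note hb = assms(1) and hnu = assms(2) and hk = assms(3) and hg = assms(4) and he = assms(5)
    and hlow = assms(6) and hup = assms(7)
  define p where "p = \<nu> + 2"
  have p: "p > 1" using hnu by (simp add: p_def)
  define e where "e = \<eta>inf"
  have e0: "e > 0" using he by (simp add: e_def)
  define a where "a = e powr (-p)"
  have a: "a > 0" using he by (simp add: a_def e_def)
  define q where "q = 1 - 1 / p"
  have q: "q > 0" "q \<noteq> 0" using p by (auto simp: q_def field_simps)
  define f where "f u = (\<gamma> * u + s\<^sup>2 * ((u + a) powr (-1 / p) - e)) / \<kappa>" for u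
  define f1 where "f1 u = (\<gamma> + s\<^sup>2 * ((-1 / p) * (u + a) powr (-1 / p - 1))) / \<kappa>" for u
  define F where "F u = (\<gamma> * u\<^sup>2 / 2 + s\<^sup>2 * (((u + a) powr q - a powr q) / q - e * u)) / \<kappa>" for u
  have ae: "a powr (-1 / p) = e"
    using p he by (simp add: a_def powr_powr e_def)
  have dF: "(F has_real_derivative f u) (at u)" if u: "u > -a" for u
  proof -
    have "(F has_real_derivative (\<gamma> * (2 * u) / 2 + s\<^sup>2 * ((q * (u + a) powr (q - 1)) / q - e)) / \<kappa>) (at u)"
      unfolding F_def[abs_def] using u hk q by (auto intro!: derivative_eq_intros)
    moreover have "q - 1 = -1 / p" by (simp add: q_def)
    ultimately show ?thesis using q by (simp add: f_def)
  qed
  have df: "(f has_real_derivative f1 u) (at u)" if u: "u > -a" for u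
  proof -
    have "(f has_real_derivative (\<gamma> + s\<^sup>2 * ((-1 / p) * (u + a) powr (-1 / p - 1))) / \<kappa>) (at u)"
      unfolding f_def[abs_def] using u hk by (auto intro!: derivative_eq_intros)
    thus ?thesis by (simp add: f1_def)
  qed
  have s0: "s\<^sup>2 > 0"
  proof -
    have "\<beta> * (\<nu> + 1) / (2 * (\<nu> + 2) * \<eta>inf powr (\<nu> + 3)) > 0" using hb hnu he by simp
    thus ?thesis using hlow by linarith
  qed
  have mono: "f1 x < f1 y" if xy: "-a < x" "x < y" for x y
  proof -
    have "(y + a) powr (-1 / p - 1) < (x + a) powr (-1 / p - 1)"
      by (rule powr_less_mono2_neg) (use xy p in \<open>auto simp: field_simps\<close>)
    have "s\<^sup>2 * ((-1 / p) * (x + a) powr (-1 / p - 1)) < s\<^sup>2 * ((-1 / p) * (y + a) powr (-1 / p - 1))"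
    proof (rule mult_strict_left_mono[OF _ s0])
      have "-1 / p < 0" using p by simp
      thus "(-1 / p) * (x + a) powr (-1 / p - 1) < (-1 / p) * (y + a) powr (-1 / p - 1)"
        by (rule mult_strict_left_mono_neg[OF \<open>(y + a) powr (-1 / p - 1) < (x + a) powr (-1 / p - 1)\<close>])
    qed
    thus ?thesis using hk by (simp add: f1_def divide_strict_right_mono)
  qed
  have F0: "F 0 = 0" by (simp add: F_def)
  have f0: "f 0 = 0" using ae by (simp add: f_def)
  have f10: "f1 0 > 0"
  proof -
    have ex: "-p * (-1 / p - 1) = p + 1" using p by (simp add: field_simps)
    have "a powr (-1 / p - 1) = e powr (-p * (-1 / p - 1))"
      by (simp only: a_def powr_powr)
    hence "a powr (-1 / p - 1) = e powr (p + 1)" by (simp only: ex)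
    moreover have "s\<^sup>2 * e powr (p + 1) < \<beta>"
      using hup he by (simp add: p_def e_def field_simps add.commute)
    ultimately have "s\<^sup>2 * ((1 / p) * a powr (-1 / p - 1)) < \<gamma>"
      using p by (simp add: hg p_def[symmetric] field_simps)
    thus ?thesis using hk by (simp add: f1_def)
  qed
  have cp: "continuous_on {-a..0} (\<lambda>u. (u + a) powr q)"
    by (rule continuous_on_powr') (use q in \<open>auto intro!: continuous_intros\<close>)
  have cont: "continuous_on {-a..0} F"
    unfolding F_def[abs_def]
    by (intro cp continuous_on_divide continuous_on_add continuous_on_mult continuous_on_diff
        continuous_on_const continuous_on_id continuous_on_power) (use hk q in auto)
  have Fa: "F (-a) < 0"
  proof -
    have aq: "a powr q = a * e" using a by (simp add: q_def powr_diff ae[symmetric] powr_minus_divide field_simps)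
    define E where "E = e powr (p + 1)"
    have E: "E > 0" using he by (simp add: E_def e_def)
    have "a / e = 1 / e powr (p + 1)" using e0 by (simp add: a_def powr_add powr_minus field_simps)
    hence aE: "a = e / E" using e0 E by (simp add: field_simps E_def)
    have "e powr (\<nu> + 3) = E" unfolding E_def p_def e_def by (simp add: add.assoc)
    hence h: "\<beta> * (p - 1) / (2 * p * E) < s\<^sup>2" using hlow by (simp add: p_def e_def add.commute)
    hence h2: "\<beta> * (p - 1) < s\<^sup>2 * (2 * p * E)" using E p by (simp add: divide_less_eq)
    have pos: "e\<^sup>2 / (2 * p * (p - 1) * E\<^sup>2) > 0" using E p he by (simp add: e_def)
    have lhs: "\<gamma> * a\<^sup>2 / 2 = (\<beta> * (p - 1)) * (e\<^sup>2 / (2 * p * (p - 1) * E\<^sup>2))"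
      using p E by (simp add: hg p_def[symmetric] aE field_simps power2_eq_square)
    have rhs: "s\<^sup>2 * a * e / (p - 1) = (s\<^sup>2 * (2 * p * E)) * (e\<^sup>2 / (2 * p * (p - 1) * E\<^sup>2))"
      using p E by (simp add: aE field_simps power2_eq_square)
    have qi: "q = (p - 1) / p" using p by (simp add: q_def field_simps)
    have "F (-a) = (\<gamma> * a\<^sup>2 / 2 + s\<^sup>2 * ((0 - a * e) / q - e * (-a))) / \<kappa>"
      using q by (simp add: F_def aq)
    also have "\<dots> = (\<gamma> * a\<^sup>2 / 2 - s\<^sup>2 * a * e / (p - 1)) / \<kappa>"
      using p by (simp add: qi field_simps)
    finally have "F (-a) = (\<gamma> * a\<^sup>2 / 2 - s\<^sup>2 * a * e / (p - 1)) / \<kappa>" .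
    moreover have "\<gamma> * a\<^sup>2 / 2 < s\<^sup>2 * a * e / (p - 1)"
      unfolding lhs rhs by (rule mult_strict_right_mono[OF h2 pos])
    ultimately show ?thesis using hk by (simp add: divide_neg_pos)
  qed
  obtain us where us: "-a < us" "us < 0" "F us = 0" "f us > 0" "\<And>u. us < u \<Longrightarrow> u < 0 \<Longrightarrow> F u > 0"
    using ustar_exists[of a F f f1, OF a dF df mono F0 f0 f10 cont Fa] by blast
  interpret H: hom a us F f f1
    by (unfold_locales) (use a dF df mono F0 f0 f10 us in auto)
  obtain u u1 where u: "\<And>z. us \<le> u z \<and> u z < 0" "\<And>z. (u has_real_derivative u1 z) (at z)"
      "\<And>z. (u1 has_real_derivative f (u z)) (at z)" "(u \<longlongrightarrow> 0) at_top" "(u \<longlongrightarrow> 0) at_bot"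
    using H.core by blast
  have ua: "u z + a > 0" for z using u(1)[of z] us(1) by linarith
  define D where "D = (\<lambda>k x. (\<Prod>i<k. (-1 / p - real i)) * (x + a) powr (-1 / p - real k))"
  have smD: "sm_on {x. x > -a} D" unfolding D_def by (rule sm_on_powr)
  have D0: "D 0 x = (x + a) powr (-1 / p)" for x by (simp add: D_def)
  have uS: "u z \<in> {x. x > -a}" for z using ua[of z] by simp
  have hf: "(\<lambda>z. f (u z)) = (\<lambda>z. (\<gamma> / \<kappa>) * u z + ((s\<^sup>2 / \<kappa>) * D 0 (u z) + (- (s\<^sup>2 * e / \<kappa>))))"
    using hk by (intro ext) (simp add: f_def D0 field_simps)
  have Cu: "Cn n u" for n
  proof (rule Cn_ode[OF u(2) u(3)])
    fix n assume Cu: "Cn n u"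
    have "Cn n (\<lambda>z. (\<gamma> / \<kappa>) * u z + ((s\<^sup>2 / \<kappa>) * D 0 (u z) + (- (s\<^sup>2 * e / \<kappa>))))"
      by (intro Cn_add Cn_mult Cn_const Cu Cn_comp[OF smD uS])
    thus "Cn n (\<lambda>z. f (u z))" unfolding hf .
  qed
  define w where "w z = u z / s" for z
  define \<eta> where "\<eta> z = (u z + a) powr (-1 / p)" for z
  have s_ne: "s \<noteq> 0" using s0 by auto
  have sw: "smooth_real w"
  proof (rule Cn_smooth)
    fix n
    have "Cn n (\<lambda>z. (1 / s) * u z)" by (intro Cn_mult Cn_const Cu)
    thus "Cn n w" unfolding w_def[abs_def] by simp
  qed
  have se: "smooth_real \<eta>"
  proof (rule Cn_smooth)
    fix n
    have "Cn n (\<lambda>z. D 0 (u z))" by (rule Cn_comp[OF smD uS Cu])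
    thus "Cn n \<eta>" unfolding \<eta>_def[abs_def] D0 .
  qed
  have epos: "\<eta> z > 0" for z using ua[of z] by (simp add: \<eta>_def)
  have egt: "\<eta> z > \<eta>inf" for z
  proof -
    have "a powr (-1 / p) < (u z + a) powr (-1 / p)"
      by (rule powr_less_mono2_neg) (use p ua[of z] u(1)[of z] in auto)
    thus ?thesis using ae by (simp add: \<eta>_def e_def)
  qed
  have eq1: "s * w z + \<eta>inf powr (-(\<nu> + 2)) - \<eta> z powr (-(\<nu> + 2)) = 0" for z
  proof -
    have "\<eta> z powr (-(\<nu> + 2)) = u z + a"
      using ua[of z] p by (simp add: \<eta>_def powr_powr p_def[symmetric])
    moreover have "\<eta>inf powr (-(\<nu> + 2)) = a" by (simp add: a_def e_def p_def)
    ultimately show ?thesis using s_ne by (simp add: w_def)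
  qed
  have dw: "deriv w = (\<lambda>z. u1 z / s)"
    by (rule ext, rule DERIV_imp_deriv) (unfold w_def[abs_def], rule DERIV_cdivide[OF u(2)])
  have ddw: "deriv (deriv w) = (\<lambda>z. f (u z) / s)"
    unfolding dw by (rule ext, rule DERIV_imp_deriv, rule DERIV_cdivide[OF u(3)])
  have eq2: "\<gamma> * w z - \<kappa> * deriv (deriv w) z + s * (\<eta> z - \<eta>inf) = 0" for z
    using s_ne hk unfolding ddw by (simp add: w_def f_def \<eta>_def e_def field_simps power2_eq_square)
  have et: "(\<eta> \<longlongrightarrow> \<eta>inf) at_top"
  proof -
    have "((\<lambda>z. (u z + a) powr (-1 / p)) \<longlongrightarrow> (0 + a) powr (-1 / p)) at_top"
      by (intro tendsto_intros u(4)) (use a in auto)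
    thus ?thesis using ae by (simp add: \<eta>_def[abs_def] e_def)
  qed
  have eb: "(\<eta> \<longlongrightarrow> \<eta>inf) at_bot"
  proof -
    have "((\<lambda>z. (u z + a) powr (-1 / p)) \<longlongrightarrow> (0 + a) powr (-1 / p)) at_bot"
      by (intro tendsto_intros u(5)) (use a in auto)
    thus ?thesis using ae by (simp add: \<eta>_def[abs_def] e_def)
  qed
  have wt: "(w \<longlongrightarrow> 0) at_top"
    using tendsto_divide[OF u(4) tendsto_const[of s]] s_ne by (simp add: w_def[abs_def])
  have wb: "(w \<longlongrightarrow> 0) at_bot"
    using tendsto_divide[OF u(5) tendsto_const[of s]] s_ne by (simp add: w_def[abs_def])
  have nc: "\<not> (\<exists>c. \<forall>z. \<eta> z = c)"
  proof
    assume "\<exists>c. \<forall>z. \<eta> z = c"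
    then obtain C where C: "\<And>z. \<eta> z = C" by blast
    hence "((\<lambda>z::real. C) \<longlongrightarrow> \<eta>inf) at_top" using et by (simp add: C[abs_def])
    hence "C = \<eta>inf" by (simp add: tendsto_const_iff)
    thus False using egt[of 0] C[of 0] by simp
  qed
  show ?thesis
    by (intro exI[of _ w] exI[of _ \<eta>] conjI allI sw se epos nc eq1 eq2 et eb wt wb egt)
qed

end
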